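(* Let $R$ be a commutative ring and $M$ an $R$-module. The following are equivalent: (1) $M$ is a coherent $R$-module (finitely generated, with every finitely generated submodule finitely presented); (2) $M$ is $u$-$(R\setminus\mathfrak p)$-coherent for every prime ideal $\mathfrak p$ of $R$; (3) $M$ is $u$-$(R\setminus\mathfrak m)$-coherent for every maximal ideal $\mathfrak m$ of $R$.
   Context: For a multiplicative subset $S$ of $R$ (containing $1$, closed under products): $M$ is $S$-finite with respect to $s\in S$ if there is a finitely generated submodule $F\subseteq M$ with $sM\subseteq F$; $M$ is $u$-$S$-finitely presented with respect to $s$ if there is an exact sequence $0\to T_1\to F\to M\to T_2\to 0$ with $F$ finitely presented and $sT_1=sT_2=0$; $M$ is $u$-$S$-coherent if there is $s\in S$ such that $M$ is $S$-finite with respect to $s$ and every finitely generated submodule of $M$ is $u$-$S$-finitely presented with respect to $s$. *)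

theory Defs
  imports Main "HOL.Modules" "HOL-Library.Function_Algebras"
begin

text \<open>Setting: R is a commutative ring (a type of class comm_ring_1), and the R-module M
  is the whole type 'b, with scalar multiplication sc, assumed to satisfy the module axioms.\<close>

definition ring_ideal :: "'a::comm_ring_1 set \<Rightarrow> bool" where
  "ring_ideal I \<longleftrightarrow> 0 \<in> I \<and> (\<forall>x\<in>I. \<forall>y\<in>I. x + y \<in> I) \<and> (\<forall>r. \<forall>x\<in>I. r * x \<in> I)"

definition prime_ideal :: "'a::comm_ring_1 set \<Rightarrow> bool" where
  "prime_ideal P \<longleftrightarrow> ring_ideal P \<and> P \<noteq> UNIV \<and> (\<forall>a b. a * b \<in> P \<longrightarrow> a \<in> P \<or> b \<in> P)"

definition maximal_ideal :: "'a::comm_ring_1 set \<Rightarrow> bool" where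
  "maximal_ideal m \<longleftrightarrow> ring_ideal m \<and> m \<noteq> UNIV \<and>
     (\<forall>J. ring_ideal J \<and> m \<subseteq> J \<longrightarrow> J = m \<or> J = UNIV)"

definition mspan :: "('a::comm_ring_1 \<Rightarrow> 'b::ab_group_add \<Rightarrow> 'b) \<Rightarrow> 'b set \<Rightarrow> 'b set" where
  "mspan sc B = {(\<Sum>a\<in>t. sc (r a) a) | t r. finite t \<and> t \<subseteq> B}"

definition fin_gen :: "('a::comm_ring_1 \<Rightarrow> 'b::ab_group_add \<Rightarrow> 'b) \<Rightarrow> 'b set \<Rightarrow> bool" where
  "fin_gen sc N \<longleftrightarrow> (\<exists>F. finite F \<and> F \<subseteq> N \<and> mspan sc F = N)"

text \<open>The free module R^n, represented as functions nat => R supported on {..<n},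
  with pointwise scalar multiplication.\<close>
definition fvec :: "nat \<Rightarrow> (nat \<Rightarrow> 'a::comm_ring_1) set" where
  "fvec n = {c. \<forall>i\<ge>n. c i = 0}"

definition fscale :: "'a::comm_ring_1 \<Rightarrow> (nat \<Rightarrow> 'a) \<Rightarrow> (nat \<Rightarrow> 'a)" where
  "fscale r c = (\<lambda>i. r * c i)"

definition lmap :: "('a::comm_ring_1 \<Rightarrow> 'b::ab_group_add \<Rightarrow> 'b) \<Rightarrow> nat \<Rightarrow> (nat \<Rightarrow> 'b) \<Rightarrow> (nat \<Rightarrow> 'a) \<Rightarrow> 'b" where
  "lmap sc n g c = (\<Sum>i<n. sc (c i) (g i))"

definition lker :: "('a::comm_ring_1 \<Rightarrow> 'b::ab_group_add \<Rightarrow> 'b) \<Rightarrow> nat \<Rightarrow> (nat \<Rightarrow> 'b) \<Rightarrow> (nat \<Rightarrow> 'a) set" where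
  "lker sc n g = {c \<in> fvec n. lmap sc n g c = 0}"

text \<open>Finitely presented submodule N: there is an exact sequence R^m -> R^n -> N -> 0,
  i.e. a surjection R^n -> N with finitely generated kernel.\<close>
definition fin_pres :: "('a::comm_ring_1 \<Rightarrow> 'b::ab_group_add \<Rightarrow> 'b) \<Rightarrow> 'b set \<Rightarrow> bool" where
  "fin_pres sc N \<longleftrightarrow> (\<exists>n g. (\<forall>i<n. g i \<in> N) \<and> lmap sc n g ` fvec n = N \<and>
      fin_gen fscale (lker sc n g))"

definition coherent :: "('a::comm_ring_1 \<Rightarrow> 'b::ab_group_add \<Rightarrow> 'b) \<Rightarrow> bool" where
  "coherent sc \<longleftrightarrow> fin_gen sc UNIV \<and> (\<forall>N. fin_gen sc N \<longrightarrow> fin_pres sc N)"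

definition S_finite_wrt :: "('a::comm_ring_1 \<Rightarrow> 'b::ab_group_add \<Rightarrow> 'b) \<Rightarrow> 'a \<Rightarrow> bool" where
  "S_finite_wrt sc s \<longleftrightarrow> (\<exists>F. fin_gen sc F \<and> (\<forall>x. sc s x \<in> F))"

text \<open>u-S-finitely presented w.r.t. s: an exact sequence 0 -> T1 -> F -> N -> T2 -> 0 with
  F finitely presented and s T1 = s T2 = 0.  Every finitely presented F is R^n/K with K a
  finitely generated submodule of R^n, and a map F -> N is a map g : R^n -> N vanishing
  on K; then T1 = ker g / K and T2 = N / im g.\<close>
definition uS_fin_pres_wrt :: "('a::comm_ring_1 \<Rightarrow> 'b::ab_group_add \<Rightarrow> 'b) \<Rightarrow> 'a \<Rightarrow> 'b set \<Rightarrow> bool" where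
  "uS_fin_pres_wrt sc s N \<longleftrightarrow> (\<exists>n g K. (\<forall>i<n. g i \<in> N) \<and>
      fin_gen fscale K \<and> K \<subseteq> lker sc n g \<and>
      (\<forall>c\<in>lker sc n g. fscale s c \<in> K) \<and>
      (\<forall>x\<in>N. sc s x \<in> lmap sc n g ` fvec n))"

definition uS_coherent :: "('a::comm_ring_1 \<Rightarrow> 'b::ab_group_add \<Rightarrow> 'b) \<Rightarrow> 'a set \<Rightarrow> bool" where
  "uS_coherent sc S \<longleftrightarrow> (\<exists>s\<in>S. S_finite_wrt sc s \<and>
      (\<forall>N. fin_gen sc N \<longrightarrow> uS_fin_pres_wrt sc s N))"

end

theory Submission
  imports Defs
begin


lemma ideal_one_UNIV: "ring_ideal I \<Longrightarrow> 1 \<in> I \<Longrightarrow> I = UNIV"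
  unfolding ring_ideal_def by (metis UNIV_eq_I mult.right_neutral)

lemma maximal_prime: assumes "maximal_ideal m" shows "prime_ideal m"
proof -
  have I: "ring_ideal m" and ne: "m \<noteq> UNIV" and mx: "\<And>J. ring_ideal J \<Longrightarrow> m \<subseteq> J \<Longrightarrow> J = m \<or> J = UNIV"
    using assms unfolding maximal_ideal_def by auto
  have m0: "0 \<in> m" and m1: "\<And>r x. x \<in> m \<Longrightarrow> r * x \<in> m" and m2: "\<And>x y. x \<in> m \<Longrightarrow> y \<in> m \<Longrightarrow> x + y \<in> m"
    using I unfolding ring_ideal_def by auto
  have "a \<in> m \<or> b \<in> m" if ab: "a * b \<in> m" for a b
  proof (rule ccontr)
    assume na: "\<not> (a \<in> m \<or> b \<in> m)"
    define J where "J = {y. \<exists>x r. x \<in> m \<and> y = x + r * a}"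
    have J0: "0 \<in> J" unfolding J_def using m0 by (intro CollectI exI[of _ 0] conjI) simp_all
    have J2: "x + y \<in> J" if xy: "x \<in> J" "y \<in> J" for x y
    proof -
      obtain x1 r1 x2 r2 where h: "x = x1 + r1 * a" "y = x2 + r2 * a" "x1 \<in> m" "x2 \<in> m"
        using xy unfolding J_def by blast
      have "x + y = (x1 + x2) + (r1 + r2) * a" using h(1,2) by (simp add: algebra_simps)
      then show ?thesis unfolding J_def using m2[OF h(3,4)] by blast
    qed
    have J1: "r * x \<in> J" if xJ: "x \<in> J" for r x
    proof -
      obtain x1 r1 where h: "x = x1 + r1 * a" "x1 \<in> m"
        using xJ unfolding J_def by blast
      have "r * x = r * x1 + (r * r1) * a" using h(1) by (simp add: algebra_simps)
      then show ?thesis unfolding J_def using m1[OF h(2)] by blast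
    qed
    have "ring_ideal J" unfolding ring_ideal_def using J0 J1 J2 by blast
    moreover have "m \<subseteq> J"
    proof
      fix x assume "x \<in> m"
      moreover have "x = x + 0 * a" by simp
      ultimately show "x \<in> J" unfolding J_def by blast
    qed
    moreover have "a \<in> J"
    proof -
      have "a = 0 + 1 * a" by simp
      then show ?thesis unfolding J_def using m0 by blast
    qed
    ultimately have "J = UNIV" using mx na by blast
    then have "1 \<in> J" by simp
    then obtain x r where xr: "1 = x + r * a" "x \<in> m" unfolding J_def by blast
    have "b = b * (x + r * a)" using xr(1) by simp
    also have "\<dots> = b * x + r * (a * b)" by (simp add: algebra_simps)
    also have "\<dots> \<in> m" by (rule m2[OF m1[OF xr(2)] m1[OF ab]])
    finally show False using na by simp
  qed
  then show ?thesis using I ne unfolding prime_ideal_def by blast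
qed

lemma prime_one: "prime_ideal P \<Longrightarrow> (1::'a::comm_ring_1) \<notin> P"
  unfolding prime_ideal_def using ideal_one_UNIV by blast

lemma exists_maximal:
  fixes I :: "'a::comm_ring_1 set"
  assumes "ring_ideal I" "1 \<notin> I"
  shows "\<exists>m. maximal_ideal m \<and> I \<subseteq> m"
proof -
  define A where "A = {J. ring_ideal J \<and> I \<subseteq> J \<and> (1::'a) \<notin> J}"
  have "\<exists>U\<in>A. \<forall>X\<in>C. X \<subseteq> U" if ch: "subset.chain A C" for C
  proof (cases "C = {}")
    case True then show ?thesis using assms unfolding A_def by auto
  next
    case False
    have CA: "C \<subseteq> A" and tot: "\<And>X Y. X \<in> C \<Longrightarrow> Y \<in> C \<Longrightarrow> X \<subseteq> Y \<or> Y \<subseteq> X"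
      using ch unfolding subset_chain_def by auto
    have "ring_ideal (\<Union>C)" unfolding ring_ideal_def
    proof (intro conjI ballI allI)
      show "0 \<in> \<Union>C" using False CA unfolding A_def ring_ideal_def by auto
    next
      fix x y assume "x \<in> \<Union>C" "y \<in> \<Union>C"
      then obtain X Y where "x \<in> X" "y \<in> Y" "X \<in> C" "Y \<in> C" by auto
      then show "x + y \<in> \<Union>C" using tot[of X Y] CA unfolding A_def ring_ideal_def by blast
    next
      fix r x assume "x \<in> \<Union>C" then show "r * x \<in> \<Union>C" using CA unfolding A_def ring_ideal_def by blast
    qed
    moreover have "I \<subseteq> \<Union>C" "1 \<notin> \<Union>C" using False CA unfolding A_def by auto
    ultimately show ?thesis unfolding A_def by blast
  qed
  from subset_Zorn[OF this] obtain M where M: "M \<in> A" "\<And>X. X \<in> A \<Longrightarrow> M \<subseteq> X \<Longrightarrow> X = M" by blast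
  have "maximal_ideal M" unfolding maximal_ideal_def
  proof (intro conjI allI impI)
    show "ring_ideal M" "M \<noteq> UNIV" using M(1) unfolding A_def by auto
    fix J assume "ring_ideal J \<and> M \<subseteq> J"
    then show "J = M \<or> J = UNIV" using M(2)[of J] M(1) ideal_one_UNIV unfolding A_def by blast
  qed
  then show ?thesis using M(1) unfolding A_def by blast
qed

lemma local_unit:
  fixes Q :: "'a::comm_ring_1 \<Rightarrow> bool"
  assumes "\<And>m. maximal_ideal m \<Longrightarrow> \<exists>t. t \<notin> m \<and> Q t"
  shows "\<exists>T u. finite T \<and> (\<forall>t\<in>T. Q t) \<and> (\<Sum>t\<in>T. u t * t) = 1"
proof (rule ccontr)
  assume neg: "\<not> ?thesis"
  define I where "I = {(\<Sum>t\<in>T. u t * t) | T u. finite T \<and> (\<forall>t\<in>T. Q t)}"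
  have "ring_ideal I" unfolding ring_ideal_def
  proof (intro conjI ballI allI)
    show "0 \<in> I" unfolding I_def by (intro CollectI exI[of _ "{}"]) auto
  next
    fix x y assume "x \<in> I" "y \<in> I"
    then obtain T1 u1 T2 u2 where h: "x = (\<Sum>t\<in>T1. u1 t * t)" "y = (\<Sum>t\<in>T2. u2 t * t)"
      "finite T1" "finite T2" "\<forall>t\<in>T1. Q t" "\<forall>t\<in>T2. Q t" unfolding I_def by blast
    define u where "u t = (if t \<in> T1 then u1 t else 0) + (if t \<in> T2 then u2 t else 0)" for t
    have "(\<Sum>t\<in>T1 \<union> T2. u t * t) = (\<Sum>t\<in>T1 \<union> T2. (if t \<in> T1 then u1 t * t else 0)) + (\<Sum>t\<in>T1 \<union> T2. (if t \<in> T2 then u2 t * t else 0))"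
      unfolding sum.distrib[symmetric] by (rule sum.cong) (auto simp: u_def distrib_right)
    also have "\<dots> = x + y" using h
      by (simp add: sum.If_cases Int_absorb2 Int_absorb1 Un_upper1 Un_upper2 flip: Int_def)
    finally show "x + y \<in> I" unfolding I_def using h by (intro CollectI exI[of _ "T1 \<union> T2"] exI[of _ u]) auto
  next
    fix r x assume "x \<in> I"
    then obtain T u where h: "x = (\<Sum>t\<in>T. u t * t)" "finite T" "\<forall>t\<in>T. Q t" unfolding I_def by blast
    then show "r * x \<in> I" unfolding I_def
      by (intro CollectI exI[of _ T] exI[of _ "\<lambda>t. r * u t"]) (auto simp: sum_distrib_left mult.assoc)
  qed
  moreover have "1 \<notin> I" using neg unfolding I_def by force
  ultimately obtain m where m: "maximal_ideal m" "I \<subseteq> m" using exists_maximal by blast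
  then obtain t where "t \<notin> m" "Q t" using assms by blast
  moreover have "t \<in> I" unfolding I_def using \<open>Q t\<close>
    by (intro CollectI exI[of _ "{t}"] exI[of _ "\<lambda>_. 1"]) auto
  ultimately show False using m by blast
qed




lemma sum_fun_apply: "(sum f A) (i::nat) = (\<Sum>x\<in>A. f x i)"
  by (induction A rule: infinite_finite_induct) auto

lemma module_fscale: "module (fscale :: 'a::comm_ring_1 \<Rightarrow> (nat \<Rightarrow> 'a) \<Rightarrow> _)"
  by unfold_locales (auto simp: fscale_def algebra_simps fun_eq_iff)

interpretation F: module "fscale :: 'a::comm_ring_1 \<Rightarrow> (nat \<Rightarrow> 'a) \<Rightarrow> _"
  by (rule module_fscale)

lemma fscale_apply[simp]: "fscale r c i = r * c i"
  by (simp add: fscale_def)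

lemma fvec_subspace: "F.subspace (fvec n :: (nat \<Rightarrow> 'a::comm_ring_1) set)"
  unfolding F.subspace_def fvec_def by auto

definition ev :: "nat \<Rightarrow> nat \<Rightarrow> 'a::comm_ring_1" where
  "ev j = (\<lambda>i. if i = j then 1 else 0)"

lemma ev_fvec: "j < n \<Longrightarrow> ev j \<in> fvec n"
  by (auto simp: ev_def fvec_def)

lemma lmap_cong: "(\<And>i. i < n \<Longrightarrow> g i = g' i) \<Longrightarrow> lmap sc n g c = lmap sc n g' c"
  unfolding lmap_def by (rule sum.cong) auto

context module begin

lemma mspan_eq: "mspan scale = span"
  by (rule ext) (simp add: mspan_def span_explicit)

lemma lmap_hom: "module_hom fscale scale (lmap scale n g)"
  unfolding module_hom_iff
  using module_fscale module_axioms
  by (auto simp: lmap_def scale_left_distrib sum.distrib scale_sum_right)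

lemma lmap_ev: "j < n \<Longrightarrow> lmap scale n g (ev j) = g j"
proof -
  assume j: "j < n"
  have "lmap scale n g (ev j) = (\<Sum>i<n. if i = j then g i else 0)"
    unfolding lmap_def ev_def by (rule sum.cong) auto
  then show ?thesis using j by simp
qed

lemma lmap_comp:
  assumes "module_hom fscale scale f"
  shows "f (lmap fscale n b v) = lmap scale n (\<lambda>i. f (b i)) v"
  unfolding lmap_def by (simp add: module_hom.sum[OF assms] module_hom.scale[OF assms])

lemma lmap_add_g: "lmap scale n (\<lambda>i. g i + g' i) c = lmap scale n g c + lmap scale n g' c"
  unfolding lmap_def by (simp add: scale_right_distrib sum.distrib)

lemma lmap_scale_g: "lmap scale n (\<lambda>i. scale s (g i)) c = scale s (lmap scale n g c)"
  unfolding lmap_def by (simp add: scale_sum_right mult.commute)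

lemma lmap_in_span: "lmap scale n g c \<in> span (g ` {..<n})"
  unfolding lmap_def by (intro span_sum span_scale span_base) auto

lemma lker_subspace: "F.subspace (lker scale n g)"
proof -
  interpret h: module_hom fscale scale "lmap scale n g" by (rule lmap_hom)
  have "lker scale n g = fvec n \<inter> {x. lmap scale n g x = 0}" unfolding lker_def by auto
  then show ?thesis using F.subspace_inter[OF fvec_subspace h.subspace_kernel] by simp
qed

lemma image_lmap: "lmap scale n g ` fvec n = span (g ` {..<n})"
proof
  show "lmap scale n g ` fvec n \<subseteq> span (g ` {..<n})" using lmap_in_span by auto
  interpret h: module_hom fscale scale "lmap scale n g" by (rule lmap_hom)
  show "span (g ` {..<n}) \<subseteq> lmap scale n g ` fvec n"
  proof (rule span_minimal)
    show "g ` {..<n} \<subseteq> lmap scale n g ` fvec n"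
    proof
      fix y assume "y \<in> g ` {..<n}"
      then obtain x where "x < n" "y = g x" by auto
      then show "y \<in> lmap scale n g ` fvec n"
        by (intro image_eqI[where x="ev x"]) (simp_all add: lmap_ev ev_fvec)
    qed
    show "subspace (lmap scale n g ` fvec n)" by (rule h.subspace_image[OF fvec_subspace])
  qed
qed

lemma local_fin_gen:
  assumes V: "subspace V"
    and loc: "\<And>m. maximal_ideal m \<Longrightarrow> \<exists>t. t \<notin> m \<and> (\<exists>L. finite L \<and> L \<subseteq> V \<and> (\<forall>x\<in>V. scale t x \<in> span L))"
  shows "fin_gen scale V"
proof -
  obtain T u where T: "finite T" "\<forall>t\<in>T. \<exists>L. finite L \<and> L \<subseteq> V \<and> (\<forall>x\<in>V. scale t x \<in> span L)"
    "(\<Sum>t\<in>T. u t * t) = 1"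
    using local_unit[OF loc] by blast
  then obtain Lf where Lf: "\<And>t. t \<in> T \<Longrightarrow> finite (Lf t) \<and> Lf t \<subseteq> V \<and> (\<forall>x\<in>V. scale t x \<in> span (Lf t))"
    by metis
  define LL where "LL = (\<Union>t\<in>T. Lf t)"
  have fin: "finite LL" "LL \<subseteq> V" using Lf T(1) unfolding LL_def by auto
  have "span LL = V"
  proof
    show "span LL \<subseteq> V" using span_minimal[OF fin(2) V] .
    show "V \<subseteq> span LL"
    proof
      fix x assume x: "x \<in> V"
      have "x = scale (\<Sum>t\<in>T. u t * t) x" using T(3) by simp
      also have "\<dots> = (\<Sum>t\<in>T. scale (u t) (scale t x))" by (simp add: scale_sum_left)
      also have "\<dots> \<in> span LL"
      proof (rule span_sum, rule span_scale)
        fix t assume "t \<in> T"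
        then have "scale t x \<in> span (Lf t)" "Lf t \<subseteq> LL" using Lf x unfolding LL_def by auto
        then show "scale t x \<in> span LL" using span_mono by blast
      qed
      finally show "x \<in> span LL" .
    qed
  qed
  then show ?thesis unfolding fin_gen_def mspan_eq using fin by blast
qed

lemma key:
  assumes u: "uS_fin_pres_wrt scale s N"
    and hN: "lmap scale k h ` fvec k = N" "\<forall>j<k. h j \<in> N"
  shows "\<exists>L. finite L \<and> L \<subseteq> lker scale k h \<and>
           (\<forall>c\<in>lker scale k h. fscale (s * s) c \<in> F.span L)"
proof -
  obtain n g K where g: "\<forall>i<n. g i \<in> N" and Kfg: "fin_gen fscale K" and KG: "K \<subseteq> lker scale n g"
    and sK: "\<forall>c\<in>lker scale n g. fscale s c \<in> K" and sN: "\<forall>x\<in>N. scale s x \<in> lmap scale n g ` fvec n"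
    using u unfolding uS_fin_pres_wrt_def by blast
  obtain Kg where Kg: "finite Kg" "Kg \<subseteq> K" "F.span Kg = K"
    using Kfg unfolding fin_gen_def F.mspan_eq by blast
  have "\<forall>j. \<exists>a. j < k \<longrightarrow> a \<in> fvec n \<and> lmap scale n g a = scale s (h j)"
    using sN hN(2) by (metis image_iff)
  then obtain a where a: "\<And>j. j < k \<Longrightarrow> a j \<in> fvec n \<and> lmap scale n g (a j) = scale s (h j)"
    by metis
  have "\<forall>i. \<exists>b. i < n \<longrightarrow> b \<in> fvec k \<and> lmap scale k h b = g i"
    using g hN(1) by (metis image_iff)
  then obtain b where b: "\<And>i. i < n \<Longrightarrow> b i \<in> fvec k \<and> lmap scale k h (b i) = g i"
    by metis
  define Hm where "Hm = lmap scale k h"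
  define Gm where "Gm = lmap scale n g"
  define \<alpha> where "\<alpha> = lmap fscale k a"
  define \<beta> where "\<beta> = lmap fscale n b"
  interpret Hh: module_hom fscale scale Hm unfolding Hm_def by (rule lmap_hom)
  interpret Gh: module_hom fscale scale Gm unfolding Gm_def by (rule lmap_hom)
  interpret Ah: module_hom fscale fscale \<alpha> unfolding \<alpha>_def by (rule F.lmap_hom)
  interpret Bh: module_hom fscale fscale \<beta> unfolding \<beta>_def by (rule F.lmap_hom)
  have HB: "Hm (\<beta> v) = Gm v" for v
  proof -
    have "Hm (\<beta> v) = lmap scale n (\<lambda>i. Hm (b i)) v"
      unfolding \<beta>_def by (rule lmap_comp) (rule Hh.module_hom_axioms)
    also have "\<dots> = Gm v" unfolding Gm_def by (rule lmap_cong) (use b Hm_def in auto)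
    finally show ?thesis .
  qed
  have fvB: "\<beta> v \<in> fvec k" for v
    unfolding \<beta>_def lmap_def
    by (rule F.subspace_sum[OF fvec_subspace], rule F.subspace_scale[OF fvec_subspace]) (use b in auto)
  have fvA: "\<alpha> v \<in> fvec n" for v
    unfolding \<alpha>_def lmap_def
    by (rule F.subspace_sum[OF fvec_subspace], rule F.subspace_scale[OF fvec_subspace]) (use a in auto)
  define d where "d j = fscale s (ev j) - \<beta> (a j)" for j
  define L where "L = d ` {..<k} \<union> \<beta> ` Kg"
  have dker: "d j \<in> lker scale k h" if j: "j < k" for j
  proof -
    have "d j \<in> fvec k" unfolding d_def
      by (intro F.subspace_diff[OF fvec_subspace] F.subspace_scale[OF fvec_subspace] ev_fvec j fvB)
    moreover have "Hm (d j) = 0" unfolding d_def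
      using Hh.diff Hh.scale HB a[OF j] lmap_ev[OF j] unfolding Hm_def Gm_def by simp
    ultimately show ?thesis unfolding lker_def Hm_def by simp
  qed
  have bker: "\<beta> \<kappa> \<in> lker scale k h" if "\<kappa> \<in> Kg" for \<kappa>
  proof -
    have "\<kappa> \<in> lker scale n g" using that Kg KG by auto
    then have "Gm \<kappa> = 0" unfolding lker_def Gm_def by simp
    then show ?thesis using HB fvB unfolding lker_def Hm_def by simp
  qed
  have "fscale (s * s) c \<in> F.span L" if c: "c \<in> lker scale k h" for c
  proof -
    have cf: "c \<in> fvec k" and Hc: "Hm c = 0" using c unfolding lker_def Hm_def by auto
    have "Gm (\<alpha> c) = lmap scale k (\<lambda>j. Gm (a j)) c"
      unfolding \<alpha>_def by (rule lmap_comp) (rule Gh.module_hom_axioms)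
    also have "\<dots> = lmap scale k (\<lambda>j. scale s (h j)) c"
      by (rule lmap_cong) (use a Gm_def in auto)
    also have "\<dots> = 0" using Hc unfolding Hm_def by (simp add: lmap_scale_g)
    finally have "\<alpha> c \<in> lker scale n g" using fvA unfolding lker_def Gm_def by simp
    then have "fscale s (\<alpha> c) \<in> F.span Kg" using sK Kg by auto
    then have 1: "\<beta> (fscale s (\<alpha> c)) \<in> F.span (\<beta> ` Kg)" using Bh.span_image by auto
    have cexp: "c = lmap fscale k ev c"
    proof
      fix i
      have "lmap fscale k ev c i = (\<Sum>j<k. if j = i then c i else 0)"
        unfolding lmap_def sum_fun_apply by (rule sum.cong) (auto simp: ev_def)
      then show "c i = lmap fscale k ev c i" using cf unfolding fvec_def by auto
    qed
    have "fscale s c = lmap fscale k (\<lambda>j. fscale s (ev j)) c"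
      by (subst cexp, rule F.lmap_comp, rule F.module_hom_scale_self)
    also have "\<dots> = lmap fscale k (\<lambda>j. d j + \<beta> (a j)) c"
      unfolding d_def by simp
    also have "\<dots> = lmap fscale k d c + \<beta> (\<alpha> c)"
      unfolding F.lmap_add_g \<alpha>_def by (subst F.lmap_comp[OF Bh.module_hom_axioms]) simp
    finally have "fscale (s * s) c = fscale s (lmap fscale k d c) + \<beta> (fscale s (\<alpha> c))"
      by (simp add: F.scale_right_distrib Bh.scale flip: F.scale_scale)
    also have "\<dots> \<in> F.span L"
    proof (rule F.span_add)
      have "lmap fscale k d c \<in> F.span (d ` {..<k})" by (rule F.lmap_in_span)
      then show "fscale s (lmap fscale k d c) \<in> F.span L"
        using F.span_mono[of "d ` {..<k}" L] F.span_scale unfolding L_def by blast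
      show "\<beta> (fscale s (\<alpha> c)) \<in> F.span L"
        using 1 F.span_mono[of "\<beta> ` Kg" L] unfolding L_def by blast
    qed
    finally show ?thesis .
  qed
  moreover have "finite L" "L \<subseteq> lker scale k h" unfolding L_def using Kg(1) dker bker by auto
  ultimately show ?thesis by blast
qed

end

theorem proposition3p5:
  fixes sc :: "'a::comm_ring_1 \<Rightarrow> 'b::ab_group_add \<Rightarrow> 'b"
  assumes "module sc"
  shows "(coherent sc \<longleftrightarrow> (\<forall>P. prime_ideal P \<longrightarrow> uS_coherent sc (UNIV - P)))
       \<and> (coherent sc \<longleftrightarrow> (\<forall>m. maximal_ideal m \<longrightarrow> uS_coherent sc (UNIV - m)))"
proof -
  interpret M: module sc by (rule assms)
  have 12: "uS_coherent sc (UNIV - P)" if coh: "coherent sc" and P: "prime_ideal P" for P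
  proof -
    have "(1::'a) \<in> UNIV - P" using prime_one[OF P] by simp
    moreover have "S_finite_wrt sc 1"
      unfolding S_finite_wrt_def by (rule exI[of _ UNIV]) (use coh in \<open>simp add: coherent_def\<close>)
    moreover have "uS_fin_pres_wrt sc 1 N" if fgN: "fin_gen sc N" for N
    proof -
      obtain n g where "\<forall>i<n. g i \<in> N" "lmap sc n g ` fvec n = N" "fin_gen fscale (lker sc n g)"
        using coh fgN unfolding coherent_def fin_pres_def by blast
      then show ?thesis unfolding uS_fin_pres_wrt_def
        by (intro exI[of _ n] exI[of _ g] exI[of _ "lker sc n g"]) (auto simp: fscale_def)
    qed
    ultimately show ?thesis unfolding uS_coherent_def by (intro bexI[of _ 1] conjI allI impI) auto
  qed
  have 31: "coherent sc" if H3: "\<forall>m. maximal_ideal m \<longrightarrow> uS_coherent sc (UNIV - m)"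
  proof -
    have ex: "\<exists>s. s \<notin> m \<and> S_finite_wrt sc s \<and> (\<forall>N. fin_gen sc N \<longrightarrow> uS_fin_pres_wrt sc s N)"
      if mm: "maximal_ideal m" for m :: "'a set"
    proof -
      have "uS_coherent sc (UNIV - m)" using H3 mm by simp
      then obtain s where "s \<in> UNIV - m" "S_finite_wrt sc s" "\<forall>N. fin_gen sc N \<longrightarrow> uS_fin_pres_wrt sc s N"
        unfolding uS_coherent_def by blast
      then show ?thesis by blast
    qed
    have "fin_gen sc UNIV"
    proof (rule M.local_fin_gen[OF M.subspace_UNIV])
      fix m :: "'a set" assume "maximal_ideal m"
      then obtain s where s: "s \<notin> m" "S_finite_wrt sc s" using ex by blast
      then obtain F where F: "fin_gen sc F" "\<forall>x. sc s x \<in> F" unfolding S_finite_wrt_def by blast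
      then obtain F0 where F0: "finite F0" "M.span F0 = F" unfolding fin_gen_def M.mspan_eq by blast
      show "\<exists>t. t \<notin> m \<and> (\<exists>L. finite L \<and> L \<subseteq> UNIV \<and> (\<forall>x\<in>UNIV. sc t x \<in> M.span L))"
        using s(1) F(2) F0 by (intro exI[of _ s] conjI exI[of _ F0]) auto
    qed
    moreover have "fin_pres sc N" if N: "fin_gen sc N" for N
    proof -
      obtain H where H: "finite H" "H \<subseteq> N" "M.span H = N" using N unfolding fin_gen_def M.mspan_eq by blast
      obtain k :: nat and h where hk: "H = h ` {i. i < k}" using finite_imp_nat_seg_image_inj_on[OF H(1)] by blast
      have hk': "H = h ` {..<k}" using hk by (simp add: lessThan_def)
      have img: "lmap sc k h ` fvec k = N" using M.image_lmap H(3) hk' by simp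
      have hin: "\<forall>j<k. h j \<in> N" using H(2) hk' by auto
      have "fin_gen fscale (lker sc k h)"
      proof (rule F.local_fin_gen[OF M.lker_subspace])
        fix m :: "'a set" assume m: "maximal_ideal m"
        then obtain s where s: "s \<notin> m" "\<forall>N. fin_gen sc N \<longrightarrow> uS_fin_pres_wrt sc s N" using ex by blast
        have "s * s \<notin> m" using s(1) maximal_prime[OF m] unfolding prime_ideal_def by blast
        moreover have "\<exists>L. finite L \<and> L \<subseteq> lker sc k h \<and> (\<forall>c\<in>lker sc k h. fscale (s * s) c \<in> F.span L)"
          using M.key[OF _ img hin] s(2) N by blast
        ultimately show "\<exists>t. t \<notin> m \<and> (\<exists>L. finite L \<and> L \<subseteq> lker sc k h \<and> (\<forall>x\<in>lker sc k h. fscale t x \<in> F.span L))"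
          by (intro exI[of _ "s * s"] conjI)
      qed
      then show ?thesis unfolding fin_pres_def using img hin by (intro exI[of _ k] exI[of _ h]) simp
    qed
    ultimately show ?thesis unfolding coherent_def by simp
  qed
  have 23: "\<forall>m. maximal_ideal m \<longrightarrow> uS_coherent sc (UNIV - m)"
    if "\<forall>P. prime_ideal P \<longrightarrow> uS_coherent sc (UNIV - P)"
    using that[rule_format, OF maximal_prime] by blast
  show ?thesis using 12 23 31 by metis
qed

end
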